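(* Consider an $M^{X}/G/1$ queue operating under the LCFS-p-repeat (with resampling) discipline, with Poisson batch arrivals of rate $\lambda$, i.i.d. batch sizes distributed as $X$ with mean $\mu$, i.i.d. service times distributed as $S$ (all independent), and stable, i.e. $E(e^{-\lambda S})>\mu/(\mu+1)$. Let $X_0$ be the number of customers in the first batch of a busy period, $M$ the maximum number of customers in the system during a busy period, and $M(k)$ a random variable distributed as $M$ conditionally on $X_0=k$. Let $T$ be exponential with rate $\lambda$, independent of $S$, and $I=1$ if $T<S$ and $I=0$ otherwise. Then for $k\geq 1$, $$M(k)=_d I\,M(k+X)+(1-I)\max\{k,M(k-1)\},$$ where $M(0)=0$, $I$, $X$ and $M(k-1)$ are mutually independent, and $M(k+X)$ is independent of $I$ and $M(k-1)$.
   Context: Under LCFS-p-repeat (with resampling), the customer who has been in the system the least amount of time is always served, newly arriving customers preempt the customer in service (customers within a batch are labeled arbitrarily and treated as arriving sequentially), service is non-idling, and a preempted service must be restarted from scratch when service recommences, with a new service time drawn independently from the distribution of $S$. $Y=_dZ$ denotes equality in distribution. *)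

theory Defs
  imports "HOL-Probability.Probability" "HOL-Library.Extended_Nat"
begin

text \<open>Sample-path construction of a busy period of the M^X/G/1 queue under
LCFS-p-repeat with resampling.  The busy period starts at time 0 with an
arrival of a batch of k customers.  Primitive random inputs:
  A j   : j-th interarrival time after the start of the busy period
          (arrival j happens at time A 0 + ... + A j),
  Xs j  : size of the batch arriving at arrival j,
  Ss i  : service time drawn for the i-th service attempt (each start or
          restart of a service draws a fresh sample).
After every event (arrival or departure) a fresh service attempt starts:
an arriving batch preempts the customer in service, and after a departure
the youngest remaining customer (re)starts its service from scratch.\<close>

definition arr_time :: "(nat \<Rightarrow> real) \<Rightarrow> nat \<Rightarrow> real" where
  "arr_time A j = (\<Sum>m\<le>j. A m)"

text \<open>State: (current event time t, number in system n, index i of the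
service attempt starting at t, index j of the next arrival).\<close>

definition queue_step ::
  "(nat \<Rightarrow> real) \<Rightarrow> (nat \<Rightarrow> nat) \<Rightarrow> (nat \<Rightarrow> real) \<Rightarrow>
   real \<times> nat \<times> nat \<times> nat \<Rightarrow> real \<times> nat \<times> nat \<times> nat" where
  "queue_step A Xs Ss st = (case st of (t, n, i, j) \<Rightarrow>
     if n = 0 then (t, n, i, j)
     else if arr_time A j < t + Ss i
       then (arr_time A j, n + Xs j, Suc i, Suc j)
       else (t + Ss i, n - 1, Suc i, j))"

definition queue_state ::
  "(nat \<Rightarrow> real) \<Rightarrow> (nat \<Rightarrow> nat) \<Rightarrow> (nat \<Rightarrow> real) \<Rightarrow> nat \<Rightarrow> nat \<Rightarrow>
   real \<times> nat \<times> nat \<times> nat" where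
  "queue_state A Xs Ss k m = (queue_step A Xs Ss ^^ m) (0, k, 0, 0)"

definition busy_max ::
  "(nat \<Rightarrow> real) \<Rightarrow> (nat \<Rightarrow> nat) \<Rightarrow> (nat \<Rightarrow> real) \<Rightarrow> nat \<Rightarrow> enat" where
  "busy_max A Xs Ss k = (SUP m. enat (fst (snd (queue_state A Xs Ss k m))))"

definition M_rv ::
  "(nat \<Rightarrow> 'w \<Rightarrow> real) \<Rightarrow> (nat \<Rightarrow> 'w \<Rightarrow> nat) \<Rightarrow> (nat \<Rightarrow> 'w \<Rightarrow> real) \<Rightarrow> nat \<Rightarrow> 'w \<Rightarrow> enat" where
  "M_rv A Xs Ss k \<omega> = busy_max (\<lambda>j. A j \<omega>) (\<lambda>j. Xs j \<omega>) (\<lambda>i. Ss i \<omega>) k"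

definition MXG1_input ::
  "'w measure \<Rightarrow> real \<Rightarrow> nat pmf \<Rightarrow> real measure \<Rightarrow>
   (nat \<Rightarrow> 'w \<Rightarrow> real) \<Rightarrow> (nat \<Rightarrow> 'w \<Rightarrow> nat) \<Rightarrow> (nat \<Rightarrow> 'w \<Rightarrow> real) \<Rightarrow> bool" where
  "MXG1_input \<Omega> lam X Sd A Xs Ss \<longleftrightarrow>
     prob_space \<Omega> \<and>
     (\<forall>j. distributed \<Omega> lborel (A j) (exponential_density lam)) \<and>
     (\<forall>j. Xs j \<in> measurable \<Omega> (count_space UNIV) \<and>
          distr \<Omega> (count_space UNIV) (Xs j) = measure_pmf X) \<and>
     (\<forall>i. Ss i \<in> borel_measurable \<Omega> \<and> distr \<Omega> borel (Ss i) = Sd) \<and>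
     prob_space.indep_vars \<Omega> (\<lambda>_. borel)
       (\<lambda>c \<omega>. case c of Inl (Inl j) \<Rightarrow> A j \<omega>
                        | Inl (Inr j) \<Rightarrow> real (Xs j \<omega>)
                        | Inr i \<Rightarrow> Ss i \<omega>) UNIV"

end

theory Submission
  imports Defs
begin

lemma step_conj:
  assumes hA: "\<forall>j. arr_time A (j + dj) = arr_time A' j + c"
    and hX: "\<forall>j. Xs (j + dj) = Xs' j" and hS: "\<forall>i. Ss (i + di) = Ss' i"
  shows "queue_step A Xs Ss (t, n, i + di, j + dj) =
    (case queue_step A' Xs' Ss' (t - c, n, i, j) of (t', n', i', j') \<Rightarrow> (t' + c, n', i' + di, j' + dj))"
  using hA hX hS by (auto simp: queue_step_def)

lemma iter_conj:
  assumes hA: "\<forall>j. arr_time A (j + dj) = arr_time A' j + c"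
    and hX: "\<forall>j. Xs (j + dj) = Xs' j" and hS: "\<forall>i. Ss (i + di) = Ss' i"
  shows "(queue_step A Xs Ss ^^ m) (t, n, i + di, j + dj) =
    (case (queue_step A' Xs' Ss' ^^ m) (t - c, n, i, j) of (t', n', i', j') \<Rightarrow> (t' + c, n', i' + di, j' + dj))"
proof (induction m)
  case 0 then show ?case by simp
next
  case (Suc m)
  obtain t' n' i' j' where e: "(queue_step A' Xs' Ss' ^^ m) (t - c, n, i, j) = (t', n', i', j')"
    by (cases "(queue_step A' Xs' Ss' ^^ m) (t - c, n, i, j)") auto
  show ?case using Suc e step_conj[OF hA hX hS, of "t' + c" n' i' j'] by simp
qed

lemma busy_max_shift:
  assumes hA: "\<forall>j. arr_time A (j + dj) = arr_time A' j + c"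
    and hX: "\<forall>j. Xs (j + dj) = Xs' j" and hS: "\<forall>i. Ss (i + di) = Ss' i"
    and st: "queue_step A Xs Ss (0, k, 0, 0) = (c, n, di, dj)"
  shows "busy_max A Xs Ss k = sup (enat k) (busy_max A' Xs' Ss' n)"
proof -
  have e: "fst (snd (queue_state A Xs Ss k (Suc m))) = fst (snd (queue_state A' Xs' Ss' n m))" for m
  proof -
    have "queue_state A Xs Ss k (Suc m) = (queue_step A Xs Ss ^^ m) (c, n, 0 + di, 0 + dj)"
      unfolding queue_state_def using st by (simp add: funpow_Suc_right del: funpow.simps)
    also have "\<dots> = (case (queue_step A' Xs' Ss' ^^ m) (c - c, n, 0, 0) of (t', n', i', j') \<Rightarrow> (t' + c, n', i' + di, j' + dj))"
      by (rule iter_conj[OF hA hX hS])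
    finally show ?thesis unfolding queue_state_def by (auto split: prod.splits)
  qed
  have "busy_max A Xs Ss k = (SUP m. enat (fst (snd (queue_state A Xs Ss k m))))"
    by (simp add: busy_max_def)
  also have "\<dots> = sup (enat (fst (snd (queue_state A Xs Ss k 0)))) (SUP m. enat (fst (snd (queue_state A Xs Ss k (Suc m)))))"
  proof -
    have U: "(UNIV::nat set) = insert 0 (range Suc)" by (auto intro: nat.exhaust)
    show ?thesis by (subst U, subst SUP_insert) (simp add: image_image)
  qed
  also have "\<dots> = sup (enat k) (busy_max A' Xs' Ss' n)"
    unfolding e by (simp add: busy_max_def queue_state_def)
  finally show ?thesis .
qed

lemma arr_time_Suc: "arr_time A (Suc j) = A 0 + arr_time (\<lambda>j. A (Suc j)) j"
  unfolding arr_time_def by (rule sum.atMost_Suc_shift)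

lemma arr_time_upd0: "arr_time (A(0 := A 0 - c)) j = arr_time A j - c"
proof -
  have "arr_time (A(0 := A 0 - c)) j = (\<Sum>m\<le>j. A m - (if m = 0 then c else 0))"
    unfolding arr_time_def by (intro sum.cong) auto
  also have "\<dots> = arr_time A j - c" unfolding arr_time_def sum_subtractf by simp
  finally show ?thesis .
qed

lemma busy_max_decomp:
  assumes k: "k \<ge> 1"
  shows "busy_max A Xs Ss k =
    (if A 0 < Ss 0 then busy_max (\<lambda>j. A (Suc j)) (\<lambda>j. Xs (Suc j)) (\<lambda>i. Ss (Suc i)) (k + Xs 0)
     else max (enat k) (busy_max (A(0 := A 0 - Ss 0)) Xs (\<lambda>i. Ss (Suc i)) (k - 1)))"
proof (cases "A 0 < Ss 0")
  case True
  have st: "queue_step A Xs Ss (0, k, 0, 0) = (A 0, k + Xs 0, 1, 1)"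
    using k True by (simp add: queue_step_def arr_time_def)
  have "busy_max A Xs Ss k = sup (enat k) (busy_max (\<lambda>j. A (Suc j)) (\<lambda>j. Xs (Suc j)) (\<lambda>i. Ss (Suc i)) (k + Xs 0))"
    by (rule busy_max_shift[OF _ _ _ st]) (auto simp: arr_time_Suc)
  moreover have "enat k \<le> busy_max (\<lambda>j. A (Suc j)) (\<lambda>j. Xs (Suc j)) (\<lambda>i. Ss (Suc i)) (k + Xs 0)"
    unfolding busy_max_def
    by (rule SUP_upper2[where i=0]) (auto simp: queue_state_def)
  ultimately show ?thesis using True by (simp add: sup_absorb2)
next
  case False
  have st: "queue_step A Xs Ss (0, k, 0, 0) = (Ss 0, k - 1, 1, 0)"
    using k False by (simp add: queue_step_def arr_time_def)
  have "busy_max A Xs Ss k = sup (enat k) (busy_max (A(0 := A 0 - Ss 0)) Xs (\<lambda>i. Ss (Suc i)) (k - 1))"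
    by (rule busy_max_shift[OF _ _ _ st]) (auto simp: arr_time_upd0)
  then show ?thesis using False by (simp add: sup_max)
qed

type_synonym idx = "(nat + nat) + nat"

definition zA :: "(idx \<Rightarrow> real) \<Rightarrow> nat \<Rightarrow> real" where "zA z j = z (Inl (Inl j))"
definition zX :: "(idx \<Rightarrow> real) \<Rightarrow> nat \<Rightarrow> nat" where "zX z j = nat \<lfloor>z (Inl (Inr j))\<rfloor>"
definition zS :: "(idx \<Rightarrow> real) \<Rightarrow> nat \<Rightarrow> real" where "zS z i = z (Inr i)"
definition G :: "nat \<Rightarrow> (idx \<Rightarrow> real) \<Rightarrow> enat" where
  "G k z = busy_max (zA z) (zX z) (zS z) k"

abbreviation PB :: "(idx \<Rightarrow> real) measure" where "PB \<equiv> PiM UNIV (\<lambda>_. borel)"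

lemma meas_arr: "(\<lambda>z. arr_time (zA z) j) \<in> borel_measurable PB"
  unfolding arr_time_def zA_def by measurable

lemma meas_zS: "(\<lambda>z. zS z i) \<in> borel_measurable PB"
  unfolding zS_def by measurable

lemma meas_zX: "(\<lambda>z. zX z j) \<in> measurable PB (count_space UNIV)"
  unfolding zX_def by measurable

lemma meas_nat_pred:
  "f \<in> measurable M (count_space UNIV) \<Longrightarrow> {x \<in> space M. f x = (c::nat)} \<in> sets M"
  by measurable

lemma meas_qs:
  fixes k m :: nat
  defines "qs \<equiv> \<lambda>z. queue_state (zA z) (zX z) (zS z) k m"
  shows "(\<lambda>z. fst (qs z)) \<in> borel_measurable PB \<and>
         (\<lambda>z. fst (snd (qs z))) \<in> measurable PB (count_space UNIV) \<and>
         (\<lambda>z. fst (snd (snd (qs z)))) \<in> measurable PB (count_space UNIV) \<and>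
         (\<lambda>z. snd (snd (snd (qs z)))) \<in> measurable PB (count_space UNIV)"
  unfolding qs_def
proof (induction m)
  case 0
  show ?case by (simp add: queue_state_def)
next
  case (Suc m)
  define T where "T z = fst (queue_state (zA z) (zX z) (zS z) k m)" for z
  define Nn where "Nn z = fst (snd (queue_state (zA z) (zX z) (zS z) k m))" for z
  define Ii where "Ii z = fst (snd (snd (queue_state (zA z) (zX z) (zS z) k m)))" for z
  define Jj where "Jj z = snd (snd (snd (queue_state (zA z) (zX z) (zS z) k m)))" for z
  have mT[measurable]: "T \<in> borel_measurable PB" and mN[measurable]: "Nn \<in> measurable PB (count_space UNIV)"
    and mI[measurable]: "Ii \<in> measurable PB (count_space UNIV)" and mJ[measurable]: "Jj \<in> measurable PB (count_space UNIV)"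
    using Suc unfolding T_def Nn_def Ii_def Jj_def by auto
  have mAr[measurable]: "(\<lambda>z. arr_time (zA z) (Jj z)) \<in> borel_measurable PB"
    by (rule measurable_compose_countable[OF meas_arr mJ])
  have mSv[measurable]: "(\<lambda>z. zS z (Ii z)) \<in> borel_measurable PB"
    by (rule measurable_compose_countable[OF meas_zS mI])
  have mXv[measurable]: "(\<lambda>z. zX z (Jj z)) \<in> measurable PB (count_space UNIV)"
    by (rule measurable_compose_countable[OF meas_zX mJ])
  have st: "queue_state (zA z) (zX z) (zS z) k (Suc m) = queue_step (zA z) (zX z) (zS z) (T z, Nn z, Ii z, Jj z)" for z
    by (simp add: queue_state_def T_def Nn_def Ii_def Jj_def)
  have c1: "{z \<in> space PB. Nn z = 0} \<in> sets PB" by (rule meas_nat_pred[OF mN])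
  have c2: "{z \<in> space PB. arr_time (zA z) (Jj z) < T z + zS z (Ii z)} \<in> sets PB" by measurable
  show ?case unfolding st
    by (simp add: queue_step_def split del: if_split)

qed

lemma enat_eq_iff: "(x::enat) = enat n \<longleftrightarrow> x \<le> enat n \<and> \<not>(\<exists>m<n. x \<le> enat m)"
  by (cases x) (auto, metis le_neq_implies_less order_refl)
lemma inf_iff: "(x::enat) = \<infinity> \<longleftrightarrow> \<not>(\<exists>n. x \<le> enat n)"
  by (cases x) auto

lemma meas_SUP_enat:
  fixes f :: "nat \<Rightarrow> 'a \<Rightarrow> nat"
  assumes f: "\<And>m. f m \<in> measurable M (count_space UNIV)"
  shows "(\<lambda>x. SUP m. enat (f m x)) \<in> measurable M (count_space UNIV)"
proof -
  define F where "F x = (SUP m. enat (f m x))" for x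
  have le: "{x \<in> space M. F x \<le> enat n} \<in> sets M" for n
  proof -
    have "{x \<in> space M. F x \<le> enat n} = (\<Inter>m. {x \<in> space M. f m x \<le> n})"
      by (auto simp: F_def SUP_le_iff)
    also have "\<dots> \<in> sets M"
    proof (rule sets.countable_INT)
      have "{x \<in> space M. f m x \<le> n} \<in> sets M" for m
      proof -
        have "{x \<in> space M. f m x \<le> n} = f m -` {..n} \<inter> space M" by auto
        then show ?thesis using measurable_sets[OF f, of "{..n}" m] by simp
      qed
      then show "(\<lambda>m. {x \<in> space M. f m x \<le> n}) ` UNIV \<subseteq> sets M" by auto
    qed auto
    finally show ?thesis .
  qed
  have "F \<in> measurable M (count_space UNIV)"
    unfolding measurable_count_space_eq2_countable
  proof (intro conjI ballI)
    fix a :: enat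
    show "F -` {a} \<inter> space M \<in> sets M"
    proof (cases a)
      case (enat n)
      have "F -` {a} \<inter> space M = {x \<in> space M. F x \<le> enat n} - (\<Union>m\<in>{..<n}. {x \<in> space M. F x \<le> enat m})"
        using enat enat_eq_iff[of "F _" n] by auto
      also have "\<dots> \<in> sets M" using le by auto
      finally show ?thesis .
    next
      case infinity
      have "F -` {a} \<inter> space M = space M - (\<Union>n. {x \<in> space M. F x \<le> enat n})"
        using infinity inf_iff[of "F _"] by auto
      also have "\<dots> \<in> sets M" using le by auto
      finally show ?thesis .
    qed
  qed auto
  then show ?thesis unfolding F_def[abs_def] .
qed

lemma meas_G: "G k \<in> measurable PB (count_space UNIV)"
proof -
  have "(\<lambda>z. SUP m. enat (fst (snd (queue_state (zA z) (zX z) (zS z) k m)))) \<in> measurable PB (count_space UNIV)"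
    by (rule meas_SUP_enat) (use meas_qs in blast)
  then show ?thesis by (simp add: G_def[abs_def] busy_max_def)
qed

definition a0 :: idx where "a0 = Inl (Inl 0)"
definition x0 :: idx where "x0 = Inl (Inr 0)"
definition s0 :: idx where "s0 = Inr 0"

fun succ :: "idx \<Rightarrow> idx" where
  "succ (Inl (Inl j)) = Inl (Inl (Suc j))"
| "succ (Inl (Inr j)) = Inl (Inr (Suc j))"
| "succ (Inr i) = Inr (Suc i)"

fun tau :: "idx \<Rightarrow> idx" where
  "tau (Inr i) = Inr (Suc i)"
| "tau c = c"

definition shD :: "(idx \<Rightarrow> real) \<Rightarrow> idx \<Rightarrow> real" where
  "shD z = (\<lambda>c. if c = a0 then z a0 - z s0 else z (tau c))"

lemma G_decomp:
  assumes "k \<ge> 1"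
  shows "G k z = (if z a0 < z s0 then G (k + zX z 0) (\<lambda>c. z (succ c))
                  else max (enat k) (G (k - 1) (shD z)))"
proof -
  have 1: "zA (\<lambda>c. z (succ c)) = (\<lambda>j. zA z (Suc j))" "zX (\<lambda>c. z (succ c)) = (\<lambda>j. zX z (Suc j))"
          "zS (\<lambda>c. z (succ c)) = (\<lambda>j. zS z (Suc j))"
    by (auto simp: zA_def zX_def zS_def)
  have 2: "zA (shD z) = (zA z)(0 := zA z 0 - zS z 0)" "zX (shD z) = zX z"
          "zS (shD z) = (\<lambda>j. zS z (Suc j))"
    by (auto simp: zA_def zX_def zS_def shD_def a0_def s0_def fun_eq_iff)
  show ?thesis
    unfolding G_def 1 2 busy_max_decomp[OF assms, of "zA z" "zX z" "zS z"]
    by (simp add: zA_def zS_def a0_def s0_def)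
qed

locale mxg = 
  fixes lam :: real and X :: "nat pmf" and Sd :: "real measure"
  assumes lam_pos: "lam > 0" and Sd_prob: "prob_space Sd" and Sd_sets: "sets Sd = sets borel"
    and S_nonneg: "AE s in Sd. s \<ge> 0"
begin

definition E :: "real measure" where "E = density lborel (exponential_density lam)"
definition Xd :: "real measure" where "Xd = distr (measure_pmf X) borel real"
definition mu :: "idx \<Rightarrow> real measure" where
  "mu c = (case c of Inl (Inl _) \<Rightarrow> E | Inl (Inr _) \<Rightarrow> Xd | Inr _ \<Rightarrow> Sd)"
definition P :: "(idx \<Rightarrow> real) measure" where "P = PiM UNIV mu"

lemma prob_E: "prob_space E" unfolding E_def by (rule prob_space_exponential_density[OF lam_pos])
lemma prob_Xd: "prob_space Xd" unfolding Xd_def by (rule prob_space.prob_space_distr[OF prob_space_measure_pmf]) simp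
lemma prob_mu: "prob_space (mu c)"
  using prob_E prob_Xd Sd_prob by (auto simp: mu_def split: sum.split)
lemma sets_E: "sets E = sets borel" by (simp add: E_def)
lemma sets_mu: "sets (mu c) = sets borel"
  using Sd_sets by (auto simp: mu_def E_def Xd_def split: sum.split)
lemma space_mu: "space (mu c) = UNIV"
  using sets_eq_imp_space_eq[OF sets_mu[of c]] by simp

sublocale P: product_prob_space mu UNIV
  by (simp add: product_prob_space_def product_prob_space_axioms_def product_sigma_finite_def
      prob_space_imp_sigma_finite prob_mu)

lemma prob_P: "prob_space P" unfolding P_def by (rule P.prob_space_axioms)

lemma sets_P: "sets P = sets PB"
  unfolding P_def by (rule sets_PiM_cong) (auto simp: sets_mu)
lemma space_P: "space P = UNIV"
  unfolding P_def space_PiM by (auto simp: space_mu)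

lemma mu_succ: "mu (succ c) = mu c" by (cases c rule: succ.cases) (auto simp: mu_def)
lemma mu_tau: "mu (tau c) = mu c" by (cases c rule: tau.cases) (auto simp: mu_def)

lemma distr_succ: "distr P P (\<lambda>z c. z (succ c)) = P"
proof -
  have inj: "inj succ" by (rule injI) (elim succ.elims; auto)
  have "distr (PiM UNIV mu) (PiM UNIV (\<lambda>i. mu (succ i))) (\<lambda>\<omega>. \<lambda>n\<in>UNIV. \<omega> (succ n)) = PiM UNIV (\<lambda>i. mu (succ i))"
    by (rule distr_PiM_reindex) (auto simp: prob_mu inj)
  then have d: "distr (PiM UNIV mu) (PiM UNIV mu) (\<lambda>\<omega>. \<lambda>n\<in>UNIV. \<omega> (succ n)) = PiM UNIV mu"
    by (simp only: mu_succ)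
  have r: "(\<lambda>\<omega>. \<lambda>n\<in>UNIV. \<omega> (succ n)) = (\<lambda>z c. z (succ c))" by (auto simp: restrict_def)
  show ?thesis unfolding P_def r[symmetric] by (rule d)
qed

lemma indep_coord: "prob_space.indep_vars P mu (\<lambda>i z. z i) UNIV"
proof -
  interpret prob_space P by (rule prob_P)
  have "indep_vars mu (\<lambda>i z. z i) UNIV \<longleftrightarrow>
    distr P (PiM UNIV mu) (\<lambda>x. \<lambda>i\<in>UNIV. x i) = (PiM UNIV (\<lambda>i. distr P (mu i) (\<lambda>x. x i)))"
    by (rule indep_vars_iff_distr_eq_PiM) (auto simp: P_def)
  moreover have "(\<lambda>x::idx\<Rightarrow>real. \<lambda>i\<in>UNIV. x i) = (\<lambda>x. x)" by (auto simp: restrict_def)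
  then have "distr P (PiM UNIV mu) (\<lambda>x. \<lambda>i\<in>UNIV. x i) = P" by (simp add: P_def)
  moreover have "(\<lambda>i. distr P (mu i) (\<lambda>x. x i)) = mu"
    by (rule ext) (simp add: P_def P.PiM_component)
  ultimately show ?thesis by (simp add: P_def)
qed

end

context mxg begin

lemma sets_PiM_mu: "sets (PiM I mu) = sets (PiM I (\<lambda>_. borel))"
  by (rule sets_PiM_cong) (auto simp: sets_mu)

lemma indep_blocks:
  assumes AB: "A \<inter> B = {}" and U: "U \<in> sets (PiM A (\<lambda>_. borel))" and V: "V \<in> sets (PiM B (\<lambda>_. borel))"
  shows "emeasure P {z. restrict z A \<in> U \<and> restrict z B \<in> V} =
         emeasure P {z. restrict z A \<in> U} * emeasure P {z. restrict z B \<in> V}"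
proof -
  interpret prob_space P by (rule prob_P)
  have iv: "indep_var (PiM A mu) (\<lambda>\<omega>. restrict (\<lambda>i. \<omega> i) A) (PiM B mu) (\<lambda>\<omega>. restrict (\<lambda>i. \<omega> i) B)"
    by (rule indep_var_restrict[OF indep_coord AB]) auto
  have "prob ((\<lambda>x. (restrict x A, restrict x B)) -` (U \<times> V) \<inter> space P) =
        prob ((\<lambda>x. restrict x A) -` U \<inter> space P) * prob ((\<lambda>x. restrict x B) -` V \<inter> space P)"
    using indep_varD[OF iv] U V by (simp add: sets_PiM_mu)
  moreover have "(\<lambda>x. (restrict x A, restrict x B)) -` (U \<times> V) \<inter> space P = {z. restrict z A \<in> U \<and> restrict z B \<in> V}"
    by (auto simp: space_P)
  moreover have "(\<lambda>x. restrict x A) -` U \<inter> space P = {z. restrict z A \<in> U}"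
    by (auto simp: space_P)
  moreover have "(\<lambda>x. restrict x B) -` V \<inter> space P = {z. restrict z B \<in> V}"
    by (auto simp: space_P)
  ultimately show ?thesis
    by (simp add: emeasure_eq_measure ennreal_mult)
qed

lemma coord_law:
  assumes W: "W \<in> sets borel"
  shows "emeasure P {z. z c \<in> W} = emeasure (mu c) W"
proof -
  have "emeasure (mu c) W = emeasure (distr P (mu c) (\<lambda>z. z c)) W"
    by (simp add: P_def P.PiM_component)
  also have "\<dots> = emeasure P ((\<lambda>z. z c) -` W \<inter> space P)"
    using W by (intro emeasure_distr) (auto simp: P_def sets_mu)
  also have "(\<lambda>z. z c) -` W \<inter> space P = {z. z c \<in> W}" by (auto simp: space_P)
  finally show ?thesis ..
qed

lemma law_x0: "emeasure P {z. zX z 0 = j} = ennreal (pmf X j)"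
proof -
  have W: "{r::real. nat \<lfloor>r\<rfloor> = j} \<in> sets borel" by measurable
  have "emeasure P {z. zX z 0 = j} = emeasure P {z. z x0 \<in> {r::real. nat \<lfloor>r\<rfloor> = j}}"
    by (simp add: zX_def x0_def)
  also have "\<dots> = emeasure Xd {r::real. nat \<lfloor>r\<rfloor> = j}"
    by (subst coord_law[OF W]) (simp add: mu_def x0_def)
  also have "\<dots> = emeasure (measure_pmf X) (real -` {r::real. nat \<lfloor>r\<rfloor> = j} \<inter> space (measure_pmf X))"
    unfolding Xd_def using W by (intro emeasure_distr) auto
  also have "real -` {r::real. nat \<lfloor>r\<rfloor> = j} \<inter> space (measure_pmf X) = {j}" by auto
  finally show ?thesis by (simp add: emeasure_pmf_single)
qed

lemma meas_shift_succ:
  assumes "\<And>c. succ c \<in> B"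
  shows "(\<lambda>y c. y (succ c)) \<in> measurable (PiM B (\<lambda>_. borel)) PB"
  by (rule measurable_PiM_single') (auto intro!: measurable_component_singleton assms simp: space_PiM)

lemma F2:
  "emeasure P {z. z a0 < z s0 \<and> zX z 0 = j \<and> G m (\<lambda>c. z (succ c)) \<in> Bs} =
   emeasure P {z. z a0 < z s0} * ennreal (pmf X j) * emeasure P {z. G m z \<in> Bs}"
proof -
  define A where "A = {a0, s0, x0}"
  define B where "B = range succ"
  have AB: "A \<inter> B = {}"
  proof -
    have "succ x \<noteq> a0 \<and> succ x \<noteq> s0 \<and> succ x \<noteq> x0" for x
      by (cases x rule: succ.cases) (auto simp: a0_def s0_def x0_def)
    then show ?thesis unfolding A_def B_def by (auto simp: eq_commute[of _ "succ _"])
  qed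
  define U where "U = {y \<in> space (PiM A (\<lambda>_. borel::real measure)). y a0 < y s0 \<and> nat \<lfloor>y x0\<rfloor> = j}"
  define V where "V = {y \<in> space (PiM B (\<lambda>_. borel::real measure)). G m (\<lambda>c. y (succ c)) \<in> Bs}"
  have [simp]: "a0 \<in> A" "s0 \<in> A" "x0 \<in> A" by (auto simp: A_def)
  have U: "U \<in> sets (PiM A (\<lambda>_. borel))" unfolding U_def by measurable
  have sB: "\<And>c. succ c \<in> B" by (auto simp: B_def)
  have V: "V \<in> sets (PiM B (\<lambda>_. borel))"
  proof -
    have "(\<lambda>y. G m (\<lambda>c. y (succ c))) \<in> measurable (PiM B (\<lambda>_. borel)) (count_space UNIV)"
      using measurable_comp[OF meas_shift_succ[OF sB] meas_G] by (simp add: comp_def)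
    from measurable_sets[OF this, of Bs] show ?thesis unfolding V_def by (simp add: vimage_def Int_def conj_commute)
  qed
  have e1: "{z. restrict z A \<in> U \<and> restrict z B \<in> V} = {z. z a0 < z s0 \<and> zX z 0 = j \<and> G m (\<lambda>c. z (succ c)) \<in> Bs}"
    by (auto simp: U_def V_def space_PiM zX_def sB x0_def A_def)
  have e2: "{z. restrict z A \<in> U} = {z. z a0 < z s0 \<and> zX z 0 = j}"
    by (auto simp: U_def space_PiM zX_def x0_def A_def)
  have e3: "{z. restrict z B \<in> V} = (\<lambda>z c. z (succ c)) -` {z. G m z \<in> Bs} \<inter> space P"
    by (auto simp: V_def space_PiM sB space_P)
  have e4: "emeasure P ((\<lambda>z c. z (succ c)) -` {z. G m z \<in> Bs} \<inter> space P) = emeasure P {z. G m z \<in> Bs}"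
  proof -
    have mG: "{z. G m z \<in> Bs} \<in> sets P"
      using measurable_sets[OF meas_G, of Bs m] by (simp add: sets_P vimage_def space_PiM)
    have ms: "(\<lambda>z c. z (succ c)) \<in> measurable P P"
      using meas_shift_succ[of UNIV] by (simp add: P_def measurable_cong_sets[OF sets_PiM_mu sets_PiM_mu])
    have "emeasure (distr P P (\<lambda>z c. z (succ c))) {z. G m z \<in> Bs} = emeasure P ((\<lambda>z c. z (succ c)) -` {z. G m z \<in> Bs} \<inter> space P)"
      by (rule emeasure_distr[OF ms mG])
    then show ?thesis by (simp add: distr_succ)
  qed
  define A' where "A' = {a0, s0}"
  define B' where "B' = {x0}"
  have AB': "A' \<inter> B' = {}" by (auto simp: A'_def B'_def a0_def s0_def x0_def)
  define U' where "U' = {y \<in> space (PiM A' (\<lambda>_. borel::real measure)). y a0 < y s0}"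
  define V' where "V' = {y \<in> space (PiM B' (\<lambda>_. borel::real measure)). nat \<lfloor>y x0\<rfloor> = j}"
  have [simp]: "a0 \<in> A'" "s0 \<in> A'" "x0 \<in> B'" by (auto simp: A'_def B'_def)
  have U': "U' \<in> sets (PiM A' (\<lambda>_. borel))" unfolding U'_def by measurable
  have V': "V' \<in> sets (PiM B' (\<lambda>_. borel))" unfolding V'_def by measurable
  have f1: "{z. restrict z A' \<in> U' \<and> restrict z B' \<in> V'} = {z. z a0 < z s0 \<and> zX z 0 = j}"
    by (auto simp: U'_def V'_def space_PiM zX_def x0_def B'_def)
  have f2: "{z. restrict z A' \<in> U'} = {z. z a0 < z s0}" by (auto simp: U'_def space_PiM)
  have f3: "{z. restrict z B' \<in> V'} = {z. zX z 0 = j}" by (auto simp: V'_def space_PiM zX_def x0_def B'_def)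
  show ?thesis
    using indep_blocks[OF AB U V] indep_blocks[OF AB' U' V'] e1 e2 e3 e4 f1 f2 f3 law_x0[of j]
    by simp
qed

end

context mxg begin

lemma memoryless:
  assumes s: "s \<ge> 0" and phi[measurable]: "phi \<in> borel_measurable borel"
  shows "(\<integral>\<^sup>+ a. indicator {s..} a * phi (a - s) \<partial>E) = ennreal (exp (- lam * s)) * (\<integral>\<^sup>+ u. phi u \<partial>E)"
proof -
  let ?f = "\<lambda>x. ennreal (exponential_density lam x)"
  have "(\<integral>\<^sup>+ a. indicator {s..} a * phi (a - s) \<partial>E) = (\<integral>\<^sup>+ a. ?f a * (indicator {s..} a * phi (a - s)) \<partial>lborel)"
    unfolding E_def by (rule nn_integral_density) auto
  also have "\<dots> = (\<integral>\<^sup>+ u. ?f (s + u) * (indicator {s..} (s + u) * phi (s + u - s)) \<partial>lborel)"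
    using nn_integral_real_affine[where c=1 and t=s and f="\<lambda>a. ?f a * (indicator {s..} a * phi (a - s))"] by simp
  also have "\<dots> = (\<integral>\<^sup>+ u. ennreal (exp (- lam * s)) * (?f u * phi u) \<partial>lborel)"
  proof (intro nn_integral_cong)
    fix u :: real
    show "?f (s + u) * (indicator {s..} (s + u) * phi (s + u - s)) = ennreal (exp (- lam * s)) * (?f u * phi u)"
    proof (cases "u < 0")
      case True then show ?thesis by (simp add: exponential_density_def indicator_def)
    next
      case False
      have "exponential_density lam (s + u) = exp (- lam * s) * exponential_density lam u"
        using False s by (simp add: exponential_density_def algebra_simps exp_add[symmetric])
      then show ?thesis using False s
        by (simp add: indicator_def ennreal_mult' mult.assoc mult.left_commute)
    qed
  qed
  also have "\<dots> = ennreal (exp (- lam * s)) * (\<integral>\<^sup>+ u. ?f u * phi u \<partial>lborel)"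
    by (rule nn_integral_cmult) auto
  also have "(\<integral>\<^sup>+ u. ?f u * phi u \<partial>lborel) = (\<integral>\<^sup>+ u. phi u \<partial>E)"
    unfolding E_def by (rule nn_integral_density[symmetric]) auto
  finally show ?thesis .
qed

end

context mxg begin

lemma tau_ne: "c \<noteq> a0 \<Longrightarrow> tau c \<noteq> a0 \<and> tau c \<noteq> s0"
  by (cases c rule: tau.cases) (auto simp: a0_def s0_def)
lemma inj_tau: "inj tau"
proof (rule injI)
  fix x y show "tau x = tau y \<Longrightarrow> x = y"
    by (cases x rule: tau.cases; cases y rule: tau.cases) auto
qed
lemma a0_ne_s0: "a0 \<noteq> s0" by (simp add: a0_def s0_def)

lemma meas_shD: "shD \<in> measurable PB PB"
proof -
  have "(\<lambda>z. shD z c) \<in> borel_measurable PB" for c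
    by (cases "c = a0") (simp_all add: shD_def)
  then show ?thesis unfolding shD_def
    by (intro measurable_PiM_single') (auto simp: space_PiM)
qed

lemma prob_PiM_mu: "prob_space (PiM I mu)"
  by (rule prob_space_PiM) (rule prob_mu)

lemma mu_a0: "mu a0 = E" and mu_s0: "mu s0 = Sd"
  by (simp_all add: mu_def a0_def s0_def)

lemma meas_upd:
  assumes "I = J \<union> {i}"
  shows "(\<lambda>(x, Y). Y(i := x)) \<in> measurable (mu i \<Otimes>\<^sub>M PiM J mu) (PiM I mu)"
  using measurable_fun_upd[OF assms, of snd "mu i \<Otimes>\<^sub>M PiM J mu" mu fst]
  by (simp add: case_prod_beta')

lemma split_pi:
  assumes "i \<notin> J" and f[measurable]: "f \<in> borel_measurable (PiM (insert i J) mu)"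
  shows "integral\<^sup>N (PiM (insert i J) mu) f = (\<integral>\<^sup>+ Y. \<integral>\<^sup>+ x. f (Y(i := x)) \<partial>mu i \<partial>PiM J mu)"
proof -
  interpret A: prob_space "mu i" by (rule prob_mu)
  interpret B: prob_space "PiM J mu" by (rule prob_PiM_mu)
  interpret AB: pair_sigma_finite "mu i" "PiM J mu" by unfold_locales
  have T: "(\<lambda>(x, Y). Y(i := x)) \<in> measurable (mu i \<Otimes>\<^sub>M PiM J mu) (PiM (insert i J) mu)"
    by (rule meas_upd) auto
  have "integral\<^sup>N (PiM (insert i J) mu) f =
        integral\<^sup>N (distr (mu i \<Otimes>\<^sub>M PiM J mu) (PiM (insert i J) mu) (\<lambda>(x, Y). Y(i := x))) f"
    by (subst distr_pair_PiM_eq_PiM) (auto simp: prob_mu)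
  also have "\<dots> = (\<integral>\<^sup>+ p. f ((\<lambda>(x, Y). Y(i := x)) p) \<partial>(mu i \<Otimes>\<^sub>M PiM J mu))"
    by (rule nn_integral_distr[OF T]) simp
  also have "\<dots> = (\<integral>\<^sup>+ Y. \<integral>\<^sup>+ x. f (Y(i := x)) \<partial>mu i \<partial>PiM J mu)"
    by (subst AB.nn_integral_snd[symmetric]) (auto intro!: measurable_compose[OF T f] simp: case_prod_beta')
  finally show ?thesis .
qed

end

context mxg begin

lemma borel_PiM_mu: "f \<in> borel_measurable PB \<Longrightarrow> f \<in> borel_measurable (PiM UNIV mu)"
  using measurable_cong_sets[OF sets_PiM_mu refl] by auto

definition cS :: ennreal where "cS = (\<integral>\<^sup>+ s. ennreal (exp (- lam * s)) \<partial>Sd)"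

lemma F3:
  assumes g: "g \<in> borel_measurable PB"
  shows "(\<integral>\<^sup>+ z. (if z s0 \<le> z a0 then g (shD z) else 0) \<partial>P) = cS * (\<integral>\<^sup>+ z. g z \<partial>P)"
proof -
  define R2 where "R2 = UNIV - {s0, a0}"
  define R3 where "R3 = UNIV - {a0}"
  have R3: "insert a0 R3 = UNIV" "a0 \<notin> R3" by (auto simp: R3_def)
  have R2: "insert s0 R2 = R3" "s0 \<notin> R2" using a0_ne_s0 by (auto simp: R2_def R3_def)
  define h where "h z = (if z s0 \<le> z a0 then g (shD z) else 0)" for z
  have hB: "h \<in> borel_measurable PB"
    unfolding h_def using measurable_comp[OF meas_shD g] by (simp add: comp_def)
  have gB[measurable]: "g \<in> borel_measurable (PiM UNIV mu)" by (rule borel_PiM_mu[OF g])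
  have hP[measurable]: "h \<in> borel_measurable (PiM UNIV mu)" by (rule borel_PiM_mu[OF hB])
  interpret E: prob_space E by (rule prob_E)
  interpret Sd: prob_space Sd by (rule Sd_prob)
  define W where "W Y u = (\<lambda>c. if c = a0 then u else Y (tau c))" for Y :: "idx \<Rightarrow> real" and u
  define rho where "rho Y = (\<lambda>n\<in>R3. Y (tau n))" for Y :: "idx \<Rightarrow> real"
  have W_rho: "W Y u = (rho Y)(a0 := u)" for Y u
    by (auto simp: W_def rho_def R3_def)
  have updT: "(\<lambda>(Y, x). Y(i := x)) \<in> measurable (PiM J mu \<Otimes>\<^sub>M mu i) (PiM (insert i J) mu)" for i J
    using measurable_comp[OF measurable_pair_swap' meas_upd[of "insert i J" J i]] by (auto simp: comp_def case_prod_beta')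
  have rho_meas: "rho \<in> measurable (PiM R2 mu) (PiM R3 mu)"
    unfolding rho_def
  proof (rule measurable_restrict)
    fix n assume "n \<in> R3"
    then have "tau n \<in> R2" using tau_ne[of n] by (auto simp: R2_def R3_def)
    from measurable_component_singleton[OF this, of mu]
    show "(\<lambda>Y. Y (tau n)) \<in> measurable (PiM R2 mu) (mu n)" by (simp add: mu_tau)
  qed
  have step1: "integral\<^sup>N P h = (\<integral>\<^sup>+ Y3. \<integral>\<^sup>+ a. h (Y3(a0 := a)) \<partial>E \<partial>PiM R3 mu)"
    using split_pi[of a0 R3 h] R3 by (simp add: P_def mu_a0)
  define f3 where "f3 Y3 = (\<integral>\<^sup>+ a. h (Y3(a0 := a)) \<partial>E)" for Y3
  have f3m: "f3 \<in> borel_measurable (PiM (insert s0 R2) mu)"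
  proof -
    have "(\<lambda>(Y3, a). h (Y3(a0 := a))) \<in> borel_measurable (PiM R3 mu \<Otimes>\<^sub>M E)"
      using measurable_comp[OF updT[of a0 R3, unfolded R3(1)] hP] R3 by (simp add: comp_def case_prod_beta' mu_a0)
    then have "f3 \<in> borel_measurable (PiM R3 mu)"
      unfolding f3_def by (rule E.borel_measurable_nn_integral)
    then show ?thesis using R2 by simp
  qed
  have step2: "(\<integral>\<^sup>+ Y3. f3 Y3 \<partial>PiM R3 mu) = (\<integral>\<^sup>+ Y2. \<integral>\<^sup>+ s. f3 (Y2(s0 := s)) \<partial>Sd \<partial>PiM R2 mu)"
    using split_pi[OF R2(2) f3m] R2 by (simp add: mu_s0)
  define phi where "phi Y2 = (\<integral>\<^sup>+ u. g (W Y2 u) \<partial>E)" for Y2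
  have inner: "f3 (Y2(s0 := s)) = ennreal (exp (- lam * s)) * phi Y2" if s: "s \<ge> 0" for Y2 s
  proof -
    have "f3 (Y2(s0 := s)) = (\<integral>\<^sup>+ a. indicator {s..} a * g (W Y2 (a - s)) \<partial>E)"
      unfolding f3_def
    proof (intro nn_integral_cong)
      fix a
      have sh: "shD (Y2(s0 := s, a0 := a)) = W Y2 (a - s)"
        using tau_ne a0_ne_s0 by (auto simp: shD_def W_def fun_eq_iff)
      show "h (Y2(s0 := s, a0 := a)) = indicator {s..} a * g (W Y2 (a - s))"
        unfolding h_def sh using a0_ne_s0 by (simp add: indicator_def)
    qed
    also have "\<dots> = ennreal (exp (- lam * s)) * phi Y2"
      unfolding phi_def
    proof (rule memoryless[OF s])
      have "(\<lambda>u. (rho Y2)(a0 := u)) \<in> measurable borel PB"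
        by (intro measurable_PiM_single') (auto simp: space_PiM)
      from measurable_comp[OF this g] show "(\<lambda>u. g (W Y2 u)) \<in> borel_measurable borel"
        by (simp add: comp_def W_rho)
    qed
    finally show ?thesis .
  qed
  have step3: "(\<integral>\<^sup>+ s. f3 (Y2(s0 := s)) \<partial>Sd) = cS * phi Y2" for Y2
  proof -
    have "(\<integral>\<^sup>+ s. f3 (Y2(s0 := s)) \<partial>Sd) = (\<integral>\<^sup>+ s. ennreal (exp (- lam * s)) * phi Y2 \<partial>Sd)"
      by (rule nn_integral_cong_AE) (use S_nonneg inner in \<open>auto elim!: eventually_mono\<close>)
    also have "\<dots> = cS * phi Y2"
      unfolding cS_def by (rule nn_integral_multc) (simp add: measurable_cong_sets[OF Sd_sets refl])
    finally show ?thesis .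
  qed
  have phim: "phi \<in> borel_measurable (PiM R2 mu)"
  proof -
    have "(\<lambda>(Y2, u). g (W Y2 u)) \<in> borel_measurable (PiM R2 mu \<Otimes>\<^sub>M E)"
    proof -
      have "(\<lambda>(Y2, u). (rho Y2, u)) \<in> measurable (PiM R2 mu \<Otimes>\<^sub>M E) (PiM R3 mu \<Otimes>\<^sub>M mu a0)"
        using rho_meas by (simp add: mu_a0 case_prod_beta')
      from measurable_comp[OF measurable_comp[OF this updT[of a0 R3, unfolded R3(1)]] gB] R3
      show ?thesis by (simp add: comp_def case_prod_beta' W_rho)
    qed
    then show ?thesis unfolding phi_def by (rule E.borel_measurable_nn_integral)
  qed
  have step4: "(\<integral>\<^sup>+ Y2. phi Y2 \<partial>PiM R2 mu) = integral\<^sup>N P g"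
  proof -
    define F3 where "F3 Y3 = (\<integral>\<^sup>+ u. g (Y3(a0 := u)) \<partial>E)" for Y3
    have F3m: "F3 \<in> borel_measurable (PiM R3 mu)"
    proof -
      have "(\<lambda>(Y3, u). g (Y3(a0 := u))) \<in> borel_measurable (PiM R3 mu \<Otimes>\<^sub>M E)"
        using measurable_comp[OF updT[of a0 R3, unfolded R3(1)] gB] R3 by (simp add: comp_def case_prod_beta' mu_a0)
      then show ?thesis unfolding F3_def by (rule E.borel_measurable_nn_integral)
    qed
    have "(\<integral>\<^sup>+ Y2. phi Y2 \<partial>PiM R2 mu) = (\<integral>\<^sup>+ Y2. F3 (rho Y2) \<partial>PiM R2 mu)"
      by (simp add: phi_def F3_def W_rho)
    also have "\<dots> = integral\<^sup>N (distr (PiM R2 mu) (PiM R3 mu) rho) F3"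
      by (rule nn_integral_distr[symmetric, OF rho_meas]) (simp add: F3m)
    also have "distr (PiM R2 mu) (PiM R3 mu) rho = PiM R3 mu"
    proof -
      have "distr (PiM R2 mu) (PiM R3 (\<lambda>i. mu (tau i))) (\<lambda>\<omega>. \<lambda>n\<in>R3. \<omega> (tau n)) = PiM R3 (\<lambda>i. mu (tau i))"
        by (rule distr_PiM_reindex) (use tau_ne inj_tau in \<open>auto simp: prob_mu R2_def R3_def inj_on_def\<close>)
      moreover have "(\<lambda>i. mu (tau i)) = mu" by (rule ext) (rule mu_tau)
      ultimately show ?thesis by (simp add: rho_def[abs_def])
    qed
    also have "integral\<^sup>N (PiM R3 mu) F3 = integral\<^sup>N P g"
      using split_pi[of a0 R3 g] R3 by (simp add: P_def mu_a0 F3_def[abs_def])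
    finally show ?thesis .
  qed
  have "integral\<^sup>N P h = (\<integral>\<^sup>+ Y2. cS * phi Y2 \<partial>PiM R2 mu)"
    using step1 step2 step3 R2 by (simp add: f3_def)
  also have "\<dots> = cS * (\<integral>\<^sup>+ Y2. phi Y2 \<partial>PiM R2 mu)"
    by (rule nn_integral_cmult) (rule phim)
  finally have "integral\<^sup>N P h = cS * integral\<^sup>N P g" using step4 by simp
  then show ?thesis unfolding h_def .
qed

end

context mxg begin

lemma E_eq: "distributed M lborel T (exponential_density lam) \<Longrightarrow> distr M borel T = E"
proof -
  assume d: "distributed M lborel T (exponential_density lam)"
  have "distr M borel T = distr M lborel T" by (rule distr_cong) auto
  also have "\<dots> = E" using distributed_distr_eq_density[OF d] by (simp add: E_def)
  finally show ?thesis .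
qed

lemma law_Omega:
  assumes input: "MXG1_input \<Omega> lam X Sd A Xs Ss"
  shows "distr \<Omega> (count_space UNIV) (M_rv A Xs Ss k) = distr P (count_space UNIV) (G k) \<and>
         M_rv A Xs Ss k \<in> measurable \<Omega> (count_space UNIV)"
proof -
  define Z where "Z = (\<lambda>c \<omega>. case c of Inl (Inl j) \<Rightarrow> A j \<omega> | Inl (Inr j) \<Rightarrow> real (Xs j \<omega>) | Inr i \<Rightarrow> Ss i \<omega>)"
  have ps: "prob_space \<Omega>" using input by (simp add: MXG1_input_def)
  interpret O: prob_space \<Omega> by (rule ps)
  have dA: "\<And>j. distributed \<Omega> lborel (A j) (exponential_density lam)"
    and mX: "\<And>j. Xs j \<in> measurable \<Omega> (count_space UNIV)"
    and dX: "\<And>j. distr \<Omega> (count_space UNIV) (Xs j) = measure_pmf X"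
    and mS: "\<And>i. Ss i \<in> borel_measurable \<Omega>"
    and dS: "\<And>i. distr \<Omega> borel (Ss i) = Sd"
    and ind: "O.indep_vars (\<lambda>_. borel) Z UNIV"
    using input by (simp_all add: MXG1_input_def Z_def)
  have mA: "A j \<in> borel_measurable \<Omega>" for j
    using distributed_measurable[OF dA[of j]] measurable_cong_sets[OF refl sets_lborel] by simp
  have rv: "Z c \<in> borel_measurable \<Omega>" for c
  proof (cases c rule: succ.cases)
    case (2 j)
    have "(\<lambda>\<omega>. real (Xs j \<omega>)) \<in> borel_measurable \<Omega>"
      using measurable_compose[OF mX[of j], of real borel] by simp
    then show ?thesis by (simp add: Z_def 2)
  qed (simp_all add: Z_def mA mS)
  have dZ: "distr \<Omega> borel (Z c) = mu c" for c
  proof (cases c rule: succ.cases)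
    case (1 j) then show ?thesis using E_eq[OF dA[of j]] by (simp add: Z_def mu_def)
  next
    case (2 j)
    have "distr \<Omega> borel (Z c) = distr \<Omega> borel (real \<circ> Xs j)" by (simp add: Z_def 2 comp_def)
    also have "\<dots> = distr (distr \<Omega> (count_space UNIV) (Xs j)) borel real"
      by (rule distr_distr[symmetric]) (auto simp: mX)
    also have "\<dots> = Xd" by (simp add: dX Xd_def)
    finally show ?thesis by (simp add: 2 mu_def)
  next
    case (3 i) then show ?thesis using dS by (simp add: Z_def mu_def)
  qed
  have "distr \<Omega> PB (\<lambda>x. \<lambda>i\<in>UNIV. Z i x) = PiM UNIV (\<lambda>i. distr \<Omega> borel (Z i))"
    using O.indep_vars_iff_distr_eq_PiM[where I=UNIV and X=Z and M'="\<lambda>_. borel"] rv ind by auto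
  also have "(\<lambda>i. distr \<Omega> borel (Z i)) = mu" using dZ by auto
  finally have dP: "distr \<Omega> PB (\<lambda>x i. Z i x) = P" by (simp add: P_def restrict_def)
  have mZ: "(\<lambda>x i. Z i x) \<in> measurable \<Omega> PB"
    by (rule measurable_PiM_single') (auto simp: rv)
  have MG: "M_rv A Xs Ss k = G k \<circ> (\<lambda>x i. Z i x)"
    by (auto simp: M_rv_def G_def zA_def[abs_def] zX_def[abs_def] zS_def[abs_def] Z_def fun_eq_iff)
  have "distr \<Omega> (count_space UNIV) (M_rv A Xs Ss k) = distr (distr \<Omega> PB (\<lambda>x i. Z i x)) (count_space UNIV) (G k)"
    unfolding MG by (rule distr_distr[symmetric, OF meas_G mZ])
  moreover have "M_rv A Xs Ss k \<in> measurable \<Omega> (count_space UNIV)"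
    unfolding MG by (rule measurable_comp[OF mZ meas_G])
  ultimately show ?thesis by (simp add: dP)
qed

lemma cS_P: "emeasure P {z. z s0 \<le> z a0} = cS"
proof -
  interpret prob_space P by (rule prob_P)
  have "emeasure P {z. z s0 \<le> z a0} = (\<integral>\<^sup>+ z. (if z s0 \<le> z a0 then (\<lambda>_. 1::ennreal) (shD z) else 0) \<partial>P)"
  proof -
    have m: "{z. z s0 \<le> z a0} \<in> sets P"
    proof -
      have "{z \<in> space PB. z s0 \<le> z a0} \<in> sets PB" by measurable
      then show ?thesis by (simp add: sets_P space_PiM)
    qed
    show ?thesis unfolding nn_integral_indicator[OF m, symmetric]
      by (auto intro!: nn_integral_cong simp: indicator_def)
  qed
  also have "\<dots> = cS * (\<integral>\<^sup>+ z. 1 \<partial>P)" by (rule F3) simp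
  also have "\<dots> = cS" by (simp add: emeasure_space_1)
  finally show ?thesis .
qed

lemma cS_N:
  assumes N_prob: "prob_space N"
    and T_exp: "distributed N lborel T (exponential_density lam)"
    and S_rv: "S \<in> borel_measurable N" and S_distr: "distr N borel S = Sd"
    and TS_indep: "prob_space.indep_var N borel T borel S"
  shows "emeasure N {\<omega> \<in> space N. S \<omega> \<le> T \<omega>} = cS"
proof -
  interpret N: prob_space N by (rule N_prob)
  interpret E: prob_space E by (rule prob_E)
  interpret Sd: prob_space Sd by (rule Sd_prob)
  interpret ES: pair_sigma_finite E Sd by unfold_locales
  have j: "distr N borel T \<Otimes>\<^sub>M distr N borel S = distr N (borel \<Otimes>\<^sub>M borel) (\<lambda>x. (T x, S x))"
    using TS_indep N.indep_var_distribution_eq by blast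
  have mT: "T \<in> borel_measurable N"
    using distributed_measurable[OF T_exp] measurable_cong_sets[OF refl sets_lborel] by simp
  have jd: "distr N (borel \<Otimes>\<^sub>M borel) (\<lambda>x. (T x, S x)) = E \<Otimes>\<^sub>M Sd"
    using j E_eq[OF T_exp] S_distr by simp
  define D where "D = {p :: real \<times> real. snd p \<le> fst p}"
  have Dm: "D \<in> sets (borel \<Otimes>\<^sub>M borel)"
  proof -
    have "{p \<in> space (borel \<Otimes>\<^sub>M borel). snd p \<le> (fst p::real)} \<in> sets (borel \<Otimes>\<^sub>M borel)" by measurable
    then show ?thesis by (simp add: D_def space_pair_measure)
  qed
  have "emeasure N {\<omega> \<in> space N. S \<omega> \<le> T \<omega>} = emeasure (distr N (borel \<Otimes>\<^sub>M borel) (\<lambda>x. (T x, S x))) D"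
    by (subst emeasure_distr[OF measurable_Pair[OF mT S_rv] Dm]) (auto simp: D_def intro!: arg_cong[where f="emeasure N"])
  also have "\<dots> = emeasure (E \<Otimes>\<^sub>M Sd) D" by (simp add: jd)
  also have "\<dots> = (\<integral>\<^sup>+ p. indicator D p \<partial>(E \<Otimes>\<^sub>M Sd))"
    using Dm by (simp add: sets_pair_measure_cong[OF sets_E Sd_sets])
  also have "\<dots> = (\<integral>\<^sup>+ s. \<integral>\<^sup>+ t. indicator D (t, s) \<partial>E \<partial>Sd)"
    by (rule ES.nn_integral_snd[symmetric])
       (use Dm in \<open>simp add: measurable_cong_sets[OF sets_pair_measure_cong[OF sets_E Sd_sets] refl]\<close>)
  also have "\<dots> = (\<integral>\<^sup>+ s. ennreal (exp (- lam * s)) \<partial>Sd)"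
  proof (rule nn_integral_cong_AE)
    show "AE s in Sd. (\<integral>\<^sup>+ t. indicator D (t, s) \<partial>E) = ennreal (exp (- lam * s))"
      using S_nonneg
    proof (rule eventually_mono)
      fix s :: real assume s: "0 \<le> s"
      have "(\<integral>\<^sup>+ t. indicator D (t, s) \<partial>E) = (\<integral>\<^sup>+ t. indicator {s..} t * (\<lambda>_. 1) (t - s) \<partial>E)"
        by (rule nn_integral_cong) (auto simp: D_def indicator_def)
      also have "\<dots> = ennreal (exp (- lam * s)) * (\<integral>\<^sup>+ u. 1 \<partial>E)"
        by (rule memoryless[OF s]) simp
      finally show "(\<integral>\<^sup>+ t. indicator D (t, s) \<partial>E) = ennreal (exp (- lam * s))"
        by (simp add: E.emeasure_space_1)
    qed
  qed
  finally show ?thesis by (simp add: cS_def)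
qed

end

context mxg begin

lemma GP: "G m \<in> measurable P (count_space UNIV)"
  unfolding measurable_cong_sets[OF sets_P refl] by (rule meas_G)

lemma setG: "{z. G m z \<in> B} \<in> sets P"
  using measurable_sets[OF GP, of B m] by (simp add: space_P vimage_def)

lemma LHS_decomp:
  assumes k: "k \<ge> 1"
  shows "emeasure P {z. G k z \<in> B} =
    (\<Sum>j. emeasure P {z. z a0 < z s0} * ennreal (pmf X j) * emeasure P {z. G (k + j) z \<in> B})
    + cS * emeasure P {z. G (k - 1) z \<in> {m. max (enat k) m \<in> B}}"
proof -
  define B' where "B' = {m. max (enat k) m \<in> B}"
  define Ej where "Ej j = {z. z a0 < z s0 \<and> zX z 0 = j \<and> G (k + j) (\<lambda>c. z (succ c)) \<in> B}" for j
  define g :: "(idx \<Rightarrow> real) \<Rightarrow> ennreal" where "g = indicator {z. G (k - 1) z \<in> B'}"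
  have gm: "g \<in> borel_measurable PB"
  proof -
    have "{z. G (k - 1) z \<in> B'} \<in> sets PB" using setG by (simp add: sets_P)
    then show ?thesis unfolding g_def by (simp add: borel_measurable_indicator)
  qed
  have Ejm: "Ej j \<in> sets P" for j
  proof -
    have m1: "(\<lambda>z. G (k + j) (\<lambda>c. z (succ c))) \<in> measurable PB (count_space UNIV)"
      using measurable_comp[OF meas_shift_succ[of UNIV] meas_G] by (simp add: comp_def)
    have "{z \<in> space PB. z a0 < z s0 \<and> zX z 0 = j \<and> G (k + j) (\<lambda>c. z (succ c)) \<in> B} \<in> sets PB"
      using m1 meas_zX by measurable
    then show ?thesis by (simp add: Ej_def sets_P space_PiM)
  qed
  have pt: "indicator {z. G k z \<in> B} z = (\<Sum>j. indicator (Ej j) z) + (if z s0 \<le> z a0 then g (shD z) else 0)" for z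
  proof (cases "z a0 < z s0")
    case True
    have "(\<Sum>j. indicator (Ej j) z :: ennreal) = (\<Sum>j. if j = zX z 0 then indicator (Ej (zX z 0)) z else 0)"
      by (rule suminf_cong) (auto simp: Ej_def indicator_def)
    also have "\<dots> = indicator (Ej (zX z 0)) z"
      by (rule sums_unique[symmetric]) (rule sums_single)
    finally show ?thesis using True G_decomp[OF k, of z]
      by (simp add: Ej_def indicator_def)
  next
    case False
    have "(\<Sum>j. indicator (Ej j) z :: ennreal) = 0" using False by (simp add: Ej_def indicator_def)
    then show ?thesis using False G_decomp[OF k, of z]
      by (simp add: g_def B'_def indicator_def)
  qed
  have "emeasure P {z. G k z \<in> B} = (\<integral>\<^sup>+ z. indicator {z. G k z \<in> B} z \<partial>P)"
    by (rule nn_integral_indicator[symmetric, OF setG])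
  also have "\<dots> = (\<integral>\<^sup>+ z. (\<Sum>j. indicator (Ej j) z) + (if z s0 \<le> z a0 then g (shD z) else 0) \<partial>P)"
    by (simp add: pt)
  also have "\<dots> = (\<integral>\<^sup>+ z. (\<Sum>j. indicator (Ej j) z) \<partial>P) + (\<integral>\<^sup>+ z. (if z s0 \<le> z a0 then g (shD z) else 0) \<partial>P)"
  proof (rule nn_integral_add)
    show "(\<lambda>z. \<Sum>j. indicator (Ej j) z :: ennreal) \<in> borel_measurable P"
      using Ejm by measurable
    have "(\<lambda>z. if z s0 \<le> z a0 then g (shD z) else 0) \<in> borel_measurable PB"
      using measurable_comp[OF meas_shD gm] by (simp add: comp_def)
    then show "(\<lambda>z. if z s0 \<le> z a0 then g (shD z) else 0) \<in> borel_measurable P"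
      unfolding measurable_cong_sets[OF sets_P refl] .
  qed
  also have "(\<integral>\<^sup>+ z. (\<Sum>j. indicator (Ej j) z) \<partial>P) = (\<Sum>j. \<integral>\<^sup>+ z. indicator (Ej j) z \<partial>P)"
    by (rule nn_integral_suminf) (use Ejm in auto)
  also have "\<dots> = (\<Sum>j. emeasure P {z. z a0 < z s0} * ennreal (pmf X j) * emeasure P {z. G (k + j) z \<in> B})"
  proof (rule suminf_cong)
    fix j
    have "(\<integral>\<^sup>+ z. indicator (Ej j) z \<partial>P) = emeasure P (Ej j)" by (rule nn_integral_indicator[OF Ejm])
    then show "(\<integral>\<^sup>+ z. indicator (Ej j) z \<partial>P) = emeasure P {z. z a0 < z s0} * ennreal (pmf X j) * emeasure P {z. G (k + j) z \<in> B}"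
      by (simp add: F2 Ej_def)
  qed
  also have "(\<integral>\<^sup>+ z. (if z s0 \<le> z a0 then g (shD z) else 0) \<partial>P) = cS * (\<integral>\<^sup>+ z. g z \<partial>P)"
    by (rule F3[OF gm])
  also have "(\<integral>\<^sup>+ z. g z \<partial>P) = emeasure P {z. G (k - 1) z \<in> B'}"
    unfolding g_def by (rule nn_integral_indicator[OF setG])
  finally show ?thesis by (simp add: B'_def)
qed

end

lemma cs_set: "f \<in> measurable M (count_space UNIV) \<Longrightarrow> {x \<in> space M. f x \<in> A} \<in> sets M"
  using measurable_sets[of f M "count_space UNIV" A] by (simp add: vimage_def Int_def conj_commute)

lemma cs_set2: "f \<in> measurable M (count_space UNIV) \<Longrightarrow> g \<in> measurable M (count_space UNIV) \<Longrightarrow>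
   {x \<in> space M. f x \<in> A \<and> g x \<in> B} \<in> sets M"
proof -
  assume f: "f \<in> measurable M (count_space UNIV)" and g: "g \<in> measurable M (count_space UNIV)"
  have "{x \<in> space M. f x \<in> A \<and> g x \<in> B} = {x \<in> space M. f x \<in> A} \<inter> {x \<in> space M. g x \<in> B}" by auto
  then show ?thesis using cs_set[OF f] cs_set[OF g] by auto
qed

lemma enat_one_mult: "enat (Suc 0) * x = x"
  by (cases x) auto

theorem theorem3:
  fixes \<Omega> :: "'w measure" and N :: "'v measure"
    and lam :: real and X :: "nat pmf" and Sd :: "real measure"
    and A :: "nat \<Rightarrow> 'w \<Rightarrow> real" and Xs :: "nat \<Rightarrow> 'w \<Rightarrow> nat" and Ss :: "nat \<Rightarrow> 'w \<Rightarrow> real"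
    and T S :: "'v \<Rightarrow> real" and I :: "'v \<Rightarrow> nat" and Xr :: "'v \<Rightarrow> nat"
    and Mk1 MkX :: "'v \<Rightarrow> enat" and k :: nat
  assumes lam_pos: "lam > 0"
    and X_pos: "0 \<notin> set_pmf X"
    and X_mean: "integrable (measure_pmf X) real"
    and Sd_prob: "prob_space Sd" and Sd_sets: "sets Sd = sets borel"
    and S_nonneg: "AE s in Sd. s \<ge> 0"
    and stable: "(\<integral>s. exp (- lam * s) \<partial>Sd) >
                   measure_pmf.expectation X real / (measure_pmf.expectation X real + 1)"
    and input: "MXG1_input \<Omega> lam X Sd A Xs Ss"
    and k: "k \<ge> 1"
    \<comment> \<open>the auxiliary random variables on the right-hand side\<close>
    and N_prob: "prob_space N"
    and T_exp: "distributed N lborel T (exponential_density lam)"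
    and S_rv: "S \<in> borel_measurable N" and S_distr: "distr N borel S = Sd"
    and TS_indep: "prob_space.indep_var N borel T borel S"
    and I_def: "\<And>\<omega>. I \<omega> = (if T \<omega> < S \<omega> then 1 else 0)"
    and Xr_rv: "Xr \<in> measurable N (count_space UNIV)"
    and Xr_distr: "distr N (count_space UNIV) Xr = measure_pmf X"
    and Mk1_rv: "Mk1 \<in> measurable N (count_space UNIV)"
    and Mk1_distr: "distr N (count_space UNIV) Mk1 =
                    distr \<Omega> (count_space UNIV) (M_rv A Xs Ss (k - 1))"
    and MkX_rv: "MkX \<in> measurable N (count_space UNIV)"
    and MkX_cond: "\<And>j B. measure N {\<omega> \<in> space N. Xr \<omega> = j \<and> MkX \<omega> \<in> B} =
                    pmf X j * measure \<Omega> {\<omega> \<in> space \<Omega>. M_rv A Xs Ss (k + j) \<omega> \<in> B}"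
    and indep_IXM: "prob_space.indep_vars N (\<lambda>_. count_space UNIV)
                      (\<lambda>c \<omega>. if c = (0::nat) then enat (I \<omega>)
                             else if c = 1 then enat (Xr \<omega>) else Mk1 \<omega>) {0, 1, 2}"
    and indep_MkX_I: "prob_space.indep_var N (count_space UNIV) MkX (count_space UNIV) I"
    and indep_MkX_Mk1: "prob_space.indep_var N (count_space UNIV) MkX (count_space UNIV) Mk1"
  shows "distr \<Omega> (count_space UNIV) (M_rv A Xs Ss k) =
         distr N (count_space UNIV)
           (\<lambda>\<omega>. enat (I \<omega>) * MkX \<omega> + enat (1 - I \<omega>) * max (enat k) (Mk1 \<omega>))"
proof -
  interpret mxg lam X Sd unfolding mxg_def using lam_pos Sd_prob Sd_sets S_nonneg by simp
  interpret N: prob_space N by (rule N_prob)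
  interpret Pp: prob_space P by (rule prob_P)
  interpret O: prob_space \<Omega> using input by (simp add: MXG1_input_def)
  have LO: "distr \<Omega> (count_space UNIV) (M_rv A Xs Ss m) = distr P (count_space UNIV) (G m)" for m
    using law_Omega[OF input] by blast
  have MO: "M_rv A Xs Ss m \<in> measurable \<Omega> (count_space UNIV)" for m
    using law_Omega[OF input] by blast
  have LP: "emeasure (distr P (count_space UNIV) (G m)) B = emeasure P {z. G m z \<in> B}" for m B
    by (subst emeasure_distr[OF GP]) (auto simp: space_P vimage_def)
  have LOm: "measure \<Omega> {\<omega> \<in> space \<Omega>. M_rv A Xs Ss m \<omega> \<in> B} = measure P {z. G m z \<in> B}" for m B
  proof -
    have "emeasure \<Omega> {\<omega> \<in> space \<Omega>. M_rv A Xs Ss m \<omega> \<in> B} = emeasure (distr \<Omega> (count_space UNIV) (M_rv A Xs Ss m)) B"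
      by (subst emeasure_distr[OF MO]) (auto simp: vimage_def Int_def conj_commute)
    also have "\<dots> = emeasure P {z. G m z \<in> B}" by (simp add: LO LP)
    finally show ?thesis by (simp add: O.emeasure_eq_measure Pp.emeasure_eq_measure)
  qed
  have mT: "T \<in> borel_measurable N"
    using distributed_measurable[OF T_exp] measurable_cong_sets[OF refl sets_lborel] by simp
  have Ieq: "I = (\<lambda>\<omega>. if T \<omega> < S \<omega> then 1 else 0)" using I_def by auto
  have mI: "I \<in> measurable N (count_space UNIV)"
  proof -
    have "{\<omega> \<in> space N. T \<omega> < S \<omega>} \<in> sets N" using mT S_rv by measurable
    then show ?thesis unfolding Ieq by (intro measurable_If) auto
  qed
  have I01: "I \<omega> = 0 \<or> I \<omega> = 1" for \<omega> using I_def[of \<omega>] by auto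
  define rhs where "rhs \<omega> = enat (I \<omega>) * MkX \<omega> + enat (1 - I \<omega>) * max (enat k) (Mk1 \<omega>)" for \<omega>
  have rhs_eq: "rhs \<omega> = (if I \<omega> = 1 then MkX \<omega> else max (enat k) (Mk1 \<omega>))" for \<omega>
    using I01[of \<omega>] by (auto simp: rhs_def enat_one_mult zero_enat_def[symmetric])
  have mMax: "(\<lambda>\<omega>. max (enat k) (Mk1 \<omega>)) \<in> measurable N (count_space UNIV)"
    using measurable_compose[OF Mk1_rv, of "\<lambda>m. max (enat k) m" "count_space UNIV"] by simp
  have I1s: "{\<omega> \<in> space N. I \<omega> = 1} \<in> sets N"
    using measurable_sets[OF mI, of "{1}"] by (simp add: vimage_def Int_def conj_commute)
  have mrhs: "rhs \<in> measurable N (count_space UNIV)"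
    unfolding rhs_eq[abs_def] by (intro measurable_If MkX_rv mMax I1s)
  have cSN: "emeasure N {\<omega> \<in> space N. S \<omega> \<le> T \<omega>} = cS"
    by (rule cS_N[OF N_prob T_exp S_rv S_distr TS_indep])
  have I0: "emeasure N {\<omega> \<in> space N. I \<omega> = 0} = cS"
  proof -
    have "{\<omega> \<in> space N. I \<omega> = 0} = {\<omega> \<in> space N. S \<omega> \<le> T \<omega>}" by (auto simp: I_def)
    then show ?thesis using cSN by simp
  qed
  have pa: "emeasure N {\<omega> \<in> space N. I \<omega> = 1} = emeasure P {z. z a0 < z s0}"
  proof -
    have e1: "{\<omega> \<in> space N. I \<omega> = 1} = space N - {\<omega> \<in> space N. S \<omega> \<le> T \<omega>}"
      by (auto simp: I_def)
    have e2: "{z. z a0 < z s0} = space P - {z. z s0 \<le> z a0}"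
      by (auto simp: space_P)
    have sN: "{\<omega> \<in> space N. S \<omega> \<le> T \<omega>} \<in> sets N" using mT S_rv by measurable
    have sP: "{z. z s0 \<le> z a0} \<in> sets P"
    proof -
      have "{z \<in> space PB. z s0 \<le> z a0} \<in> sets PB" by measurable
      then show ?thesis by (simp add: sets_P space_PiM)
    qed
    have "N.prob {\<omega> \<in> space N. S \<omega> \<le> T \<omega>} = Pp.prob {z. z s0 \<le> z a0}"
      using cSN cS_P by (simp add: N.emeasure_eq_measure Pp.emeasure_eq_measure ennreal_inj[OF measure_nonneg measure_nonneg, symmetric])
    then have "N.prob {\<omega> \<in> space N. I \<omega> = 1} = Pp.prob {z. z a0 < z s0}"
      unfolding e1 e2 using N.prob_compl[OF sN] Pp.prob_compl[OF sP] by simp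
    then show ?thesis by (simp add: N.emeasure_eq_measure Pp.emeasure_eq_measure)
  qed
  show ?thesis
  proof (rule measure_eqI)
    show "sets (distr \<Omega> (count_space UNIV) (M_rv A Xs Ss k)) = sets (distr N (count_space UNIV)
           (\<lambda>\<omega>. enat (I \<omega>) * MkX \<omega> + enat (1 - I \<omega>) * max (enat k) (Mk1 \<omega>)))" by simp
    fix B :: "enat set"
    define B' where "B' = {m. max (enat k) m \<in> B}"
    have lhs: "emeasure (distr \<Omega> (count_space UNIV) (M_rv A Xs Ss k)) B =
      (\<Sum>j. emeasure P {z. z a0 < z s0} * ennreal (pmf X j) * emeasure P {z. G (k + j) z \<in> B})
      + cS * emeasure P {z. G (k - 1) z \<in> B'}"
      unfolding LO LP B'_def by (rule LHS_decomp[OF k])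
    have split: "rhs -` B \<inter> space N = {\<omega> \<in> space N. I \<omega> = 1 \<and> MkX \<omega> \<in> B} \<union> {\<omega> \<in> space N. I \<omega> = 0 \<and> Mk1 \<omega> \<in> B'}"
    proof -
      have "rhs \<omega> \<in> B \<longleftrightarrow> (I \<omega> = 1 \<and> MkX \<omega> \<in> B) \<or> (I \<omega> = 0 \<and> Mk1 \<omega> \<in> B')" for \<omega>
        using I01[of \<omega>] by (cases "I \<omega> = 1") (auto simp: rhs_eq B'_def)
      then show ?thesis by blast
    qed
    have s1: "{\<omega> \<in> space N. I \<omega> = 1 \<and> MkX \<omega> \<in> B} \<in> sets N"
      using cs_set2[OF mI MkX_rv, of "{1}" B] by simp
    have s2: "{\<omega> \<in> space N. I \<omega> = 0 \<and> Mk1 \<omega> \<in> B'} \<in> sets N"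
      using cs_set2[OF mI Mk1_rv, of "{0}" B'] by simp
    have t1: "emeasure N {\<omega> \<in> space N. I \<omega> = 1 \<and> MkX \<omega> \<in> B} =
      emeasure P {z. z a0 < z s0} * emeasure N {\<omega> \<in> space N. MkX \<omega> \<in> B}"
    proof -
      have "N.prob ((\<lambda>x. (MkX x, enat (I x))) -` (B \<times> {enat 1}) \<inter> space N) =
            N.prob (MkX -` B \<inter> space N) * N.prob ((\<lambda>x. enat (I x)) -` {enat 1} \<inter> space N)"
        using N.indep_varD[OF indep_MkX_I, of B "{enat 1}"] by simp
      moreover have "(\<lambda>x. (MkX x, enat (I x))) -` (B \<times> {enat 1}) \<inter> space N = {\<omega> \<in> space N. I \<omega> = 1 \<and> MkX \<omega> \<in> B}" by auto
      moreover have "MkX -` B \<inter> space N = {\<omega> \<in> space N. MkX \<omega> \<in> B}" by auto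
      moreover have "(\<lambda>x. enat (I x)) -` {enat 1} \<inter> space N = {\<omega> \<in> space N. I \<omega> = 1}" by auto
      ultimately have "emeasure N {\<omega> \<in> space N. I \<omega> = 1 \<and> MkX \<omega> \<in> B} =
          emeasure N {\<omega> \<in> space N. MkX \<omega> \<in> B} * emeasure N {\<omega> \<in> space N. I \<omega> = 1}"
        by (simp add: N.emeasure_eq_measure ennreal_mult)
      then show ?thesis using pa by (simp add: mult.commute)
    qed
    have t1b: "emeasure N {\<omega> \<in> space N. MkX \<omega> \<in> B} = (\<Sum>j. ennreal (pmf X j) * emeasure P {z. G (k + j) z \<in> B})"
    proof -
      define F where "F j = {\<omega> \<in> space N. Xr \<omega> = j \<and> MkX \<omega> \<in> B}" for j
      have Fs: "F j \<in> sets N" for j unfolding F_def using cs_set2[OF Xr_rv MkX_rv, of "{j}" B] by simp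
      have "(\<Sum>j. emeasure N (F j)) = emeasure N (\<Union>j. F j)"
      proof (rule suminf_emeasure)
        show "range F \<subseteq> sets N" using Fs by auto
        show "disjoint_family F" by (auto simp: disjoint_family_on_def F_def)
      qed
      moreover have "(\<Union>j. F j) = {\<omega> \<in> space N. MkX \<omega> \<in> B}" by (auto simp: F_def)
      moreover have "emeasure N (F j) = ennreal (pmf X j) * emeasure P {z. G (k + j) z \<in> B}" for j
        using MkX_cond[of j B] LOm[of "k + j" B]
        by (simp add: F_def N.emeasure_eq_measure Pp.emeasure_eq_measure ennreal_mult)
      ultimately show ?thesis by simp
    qed
    have t2: "emeasure N {\<omega> \<in> space N. I \<omega> = 0 \<and> Mk1 \<omega> \<in> B'} = cS * emeasure P {z. G (k - 1) z \<in> B'}"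
    proof -
      define AA where "AA i = (if i = (0::nat) then {enat 0} else B')" for i
      define XX where "XX = (\<lambda>c \<omega>. if c = (0::nat) then enat (I \<omega>) else if c = 1 then enat (Xr \<omega>) else Mk1 \<omega>)"
      have "N.prob (\<Inter>i\<in>{0, 2}. XX i -` AA i \<inter> space N) = (\<Prod>i\<in>{0, 2}. N.prob (XX i -` AA i \<inter> space N))"
        by (rule N.indep_varsD[OF indep_IXM[folded XX_def]]) auto
      moreover have "(\<Inter>i\<in>{0, 2}. XX i -` AA i \<inter> space N) = {\<omega> \<in> space N. I \<omega> = 0 \<and> Mk1 \<omega> \<in> B'}"
        by (auto simp: XX_def AA_def enat_0_iff)
      moreover have "XX 0 -` AA 0 \<inter> space N = {\<omega> \<in> space N. I \<omega> = 0}"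
        by (auto simp: XX_def AA_def enat_0_iff)
      moreover have "XX 2 -` AA 2 \<inter> space N = {\<omega> \<in> space N. Mk1 \<omega> \<in> B'}"
        by (auto simp: XX_def AA_def)
      ultimately have "emeasure N {\<omega> \<in> space N. I \<omega> = 0 \<and> Mk1 \<omega> \<in> B'} =
          emeasure N {\<omega> \<in> space N. I \<omega> = 0} * emeasure N {\<omega> \<in> space N. Mk1 \<omega> \<in> B'}"
        by (simp add: N.emeasure_eq_measure ennreal_mult)
      moreover have "emeasure N {\<omega> \<in> space N. Mk1 \<omega> \<in> B'} = emeasure P {z. G (k - 1) z \<in> B'}"
      proof -
        have "emeasure N {\<omega> \<in> space N. Mk1 \<omega> \<in> B'} = emeasure (distr N (count_space UNIV) Mk1) B'"
          by (subst emeasure_distr[OF Mk1_rv]) (auto simp: vimage_def Int_def conj_commute)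
        also have "\<dots> = emeasure P {z. G (k - 1) z \<in> B'}" by (simp add: Mk1_distr LO LP)
        finally show ?thesis .
      qed
      ultimately show ?thesis using I0 by simp
    qed
    have rhs_val: "emeasure (distr N (count_space UNIV) rhs) B =
      emeasure P {z. z a0 < z s0} * (\<Sum>j. ennreal (pmf X j) * emeasure P {z. G (k + j) z \<in> B})
      + cS * emeasure P {z. G (k - 1) z \<in> B'}"
    proof -
      have "emeasure (distr N (count_space UNIV) rhs) B = emeasure N (rhs -` B \<inter> space N)"
        by (rule emeasure_distr[OF mrhs]) simp
      also have "\<dots> = emeasure N {\<omega> \<in> space N. I \<omega> = 1 \<and> MkX \<omega> \<in> B} + emeasure N {\<omega> \<in> space N. I \<omega> = 0 \<and> Mk1 \<omega> \<in> B'}"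
        unfolding split by (rule plus_emeasure[symmetric, OF s1 s2]) auto
      finally show ?thesis using t1 t1b t2 by simp
    qed
    show "emeasure (distr \<Omega> (count_space UNIV) (M_rv A Xs Ss k)) B =
          emeasure (distr N (count_space UNIV) (\<lambda>\<omega>. enat (I \<omega>) * MkX \<omega> + enat (1 - I \<omega>) * max (enat k) (Mk1 \<omega>))) B"
    proof -
      have sm: "(\<Sum>j. emeasure P {z. z a0 < z s0} * ennreal (pmf X j) * emeasure P {z. G (k + j) z \<in> B}) =
        emeasure P {z. z a0 < z s0} * (\<Sum>j. ennreal (pmf X j) * emeasure P {z. G (k + j) z \<in> B})"
        unfolding mult.assoc by (rule ennreal_suminf_cmult)
      have "emeasure (distr \<Omega> (count_space UNIV) (M_rv A Xs Ss k)) B = emeasure (distr N (count_space UNIV) rhs) B"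
        unfolding lhs rhs_val sm ..
      then show ?thesis unfolding rhs_def .
    qed
  qed
qed

end
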